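(* Let $1\le s\le n$, $0<\gamma<1$, and let $\mathbf{A}\in\mathbb{R}^{m\times n}$ satisfy $\inf\{\|\mathbf{A}\mathbf{v}\|_2:\mathbf{v}\in S_\gamma\}\ge\eta$ for some $\eta>0$. Let $\mathbf{x}\in\mathbb{R}^n$, $\mathbf{y}=\mathbf{A}\mathbf{x}+\mathbf{e}$ with $\|\mathbf{e}\|_2\le\epsilon$, and let $\widehat{\mathbf{x}}$ be a minimizer of $\|\mathbf{z}\|_1$ over $\mathbf{z}\in\mathbb{R}^n$ subject to $\|\mathbf{y}-\mathbf{A}\mathbf{z}\|_2\le\epsilon$. Then \[ \|\widehat{\mathbf{x}}-\mathbf{x}\|_2\ \le\ \frac{2\gamma+2}{1-\gamma}\,\sigma_s(\mathbf{x})+\frac{2\epsilon}{\eta}. \]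
   Context: $S_\gamma:=\{\mathbf{v}\in\mathbb{R}^n:\|\mathbf{v}\|_2=1,\ \|\mathbf{v}_T\|_1\ge\gamma\|\mathbf{v}_{T^c}\|_1\text{ for some }T\subset[n],|T|\le s\}$, where $\mathbf{v}_T$ agrees with $\mathbf{v}$ on $T$ and is $0$ elsewhere. $\sigma_s(\mathbf{x}):=\inf\{\|\mathbf{x}-\mathbf{v}\|_1:\mathbf{v}\text{ has at most }s\text{ nonzero entries}\}$. *)

theory Defs
  imports "HOL-Analysis.Analysis"
begin

text \<open>Vectors in R^n are modelled as real^'n (the index type 'n has n elements);
matrices in R^{m x n} as real^'n^'m.\<close>

definition l1norm :: "real^'n \<Rightarrow> real" where
  "l1norm v = (\<Sum>i\<in>UNIV. \<bar>v $ i\<bar>)"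

definition restrict_vec :: "real^'n \<Rightarrow> 'n set \<Rightarrow> real^'n" where
  "restrict_vec v T = (\<chi> i. if i \<in> T then v $ i else 0)"

definition S_gamma :: "nat \<Rightarrow> real \<Rightarrow> (real^'n) set" where
  "S_gamma s \<gamma> = {v. norm v = 1 \<and>
     (\<exists>T. card T \<le> s \<and> l1norm (restrict_vec v T) \<ge> \<gamma> * l1norm (restrict_vec v (- T)))}"

definition sigma_s :: "nat \<Rightarrow> real^'n \<Rightarrow> real" where
  "sigma_s s x = Inf {l1norm (x - v) | v. card {i. v $ i \<noteq> 0} \<le> s}"

end

theory Submission
  imports Defs
begin

lemma l1_restrict: "l1norm (restrict_vec v T) = (\<Sum>i\<in>T. \<bar>v $ i\<bar>)"
proof -
  have "l1norm (restrict_vec v T) = (\<Sum>i\<in>UNIV. if i \<in> T then \<bar>v $ i\<bar> else 0)"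
    unfolding l1norm_def restrict_vec_def by (intro sum.cong) auto
  also have "\<dots> = (\<Sum>i\<in>T. \<bar>v $ i\<bar>)"
    by (simp add: sum.If_cases)
  finally show ?thesis .
qed

lemma l1_split: "l1norm (v::real^'n) = (\<Sum>i\<in>T. \<bar>v $ i\<bar>) + (\<Sum>i\<in>-T. \<bar>v $ i\<bar>)"
proof -
  have "UNIV = T \<union> -T" by auto
  then have "l1norm v = (\<Sum>i\<in>T \<union> -T. \<bar>v $ i\<bar>)" unfolding l1norm_def by simp
  also have "\<dots> = (\<Sum>i\<in>T. \<bar>v $ i\<bar>) + (\<Sum>i\<in>-T. \<bar>v $ i\<bar>)"
    by (rule sum.union_disjoint) auto
  finally show ?thesis .
qed

theorem theorem4p10:
  fixes A :: "real^'n^'m" and x xhat :: "real^'n" and e and y :: "real^'m"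
    and s :: nat and \<gamma> \<eta> \<epsilon> :: real
  assumes "1 \<le> s" and "s \<le> CARD('n)"
    and "0 < \<gamma>" and "\<gamma> < 1"
    and "\<eta> > 0"
    and "Inf ((\<lambda>v. norm (A *v v)) ` S_gamma s \<gamma>) \<ge> \<eta>"
    and "y = A *v x + e" and "norm e \<le> \<epsilon>"
    and "norm (y - A *v xhat) \<le> \<epsilon>"
    and "\<forall>z. norm (y - A *v z) \<le> \<epsilon> \<longrightarrow> l1norm xhat \<le> l1norm z"
  shows "norm (xhat - x) \<le> (2 * \<gamma> + 2) / (1 - \<gamma>) * sigma_s s x + 2 * \<epsilon> / \<eta>"
proof -
  define h where "h = xhat - x"
  define C where "C = (2 * \<gamma> + 2) / (1 - \<gamma>)"
  have Cpos: "C > 0" unfolding C_def using assms(3,4) by simp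
  have Ah: "norm (A *v h) \<le> 2 * \<epsilon>"
  proof -
    have "A *v h = (y - A *v x) - (y - A *v xhat)" unfolding h_def
      by (simp add: matrix_vector_mult_diff_distrib)
    also have "y - A *v x = e" using assms(7) by simp
    finally have "norm (A *v h) \<le> norm e + norm (y - A *v xhat)"
      by (metis norm_triangle_ineq4)
    then show ?thesis using assms(8,9) by simp
  qed
  have l1min: "l1norm xhat \<le> l1norm x" using assms(10,7,8) by simp
  have Sbound: "norm (A *v w) \<ge> \<eta>" if "w \<in> S_gamma s \<gamma>" for w
  proof -
    have "Inf ((\<lambda>v. norm (A *v v)) ` S_gamma s \<gamma>) \<le> norm (A *v w)"
      by (rule cInf_lower) (use that in \<open>auto intro: bdd_belowI[where m=0]\<close>)
    then show ?thesis using assms(6) by simp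
  qed
  have main: "norm h \<le> C * l1norm (x - v) + 2 * \<epsilon> / \<eta>"
    if vs: "card {i. v $ i \<noteq> 0} \<le> s" for v
  proof -
    define T where "T = {i. v $ i \<noteq> 0}"
    define a where "a = (\<Sum>i\<in>T. \<bar>h $ i\<bar>)"
    define b where "b = (\<Sum>i\<in>-T. \<bar>h $ i\<bar>)"
    define c where "c = (\<Sum>i\<in>-T. \<bar>x $ i\<bar>)"
    define d where "d = l1norm (x - v)"
    have d0: "d \<ge> 0" unfolding d_def l1norm_def by (simp add: sum_nonneg)
    have cd: "c \<le> d"
    proof -
      have "c = (\<Sum>i\<in>-T. \<bar>(x - v) $ i\<bar>)" unfolding c_def T_def by (intro sum.cong) auto
      also have "\<dots> \<le> d" unfolding d_def using l1_split[of "x - v" T]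
        by (simp add: sum_nonneg)
      finally show ?thesis .
    qed
    have hab: "norm h \<le> a + b" using norm_le_l1_cart[of h] l1_split[of h T]
      unfolding a_def b_def l1norm_def by simp
    have bac: "b \<le> a + 2 * c"
    proof -
      have xh: "xhat = x + h" unfolding h_def by simp
      have "(\<Sum>i\<in>T. \<bar>x $ i\<bar>) - a + (b - c) \<le>
            (\<Sum>i\<in>T. \<bar>(x + h) $ i\<bar>) + (\<Sum>i\<in>-T. \<bar>(x + h) $ i\<bar>)"
      proof -
        have "(\<Sum>i\<in>T. \<bar>x $ i\<bar> - \<bar>h $ i\<bar>) \<le> (\<Sum>i\<in>T. \<bar>(x + h) $ i\<bar>)"
          by (intro sum_mono) auto
        moreover have "(\<Sum>i\<in>-T. \<bar>h $ i\<bar> - \<bar>x $ i\<bar>) \<le> (\<Sum>i\<in>-T. \<bar>(x + h) $ i\<bar>)"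
          by (intro sum_mono) auto
        ultimately show ?thesis unfolding a_def b_def c_def
          by (simp add: sum_subtractf)
      qed
      also have "\<dots> = l1norm xhat" using l1_split[of "x + h" T] xh by simp
      also have "\<dots> \<le> l1norm x" by (rule l1min)
      also have "\<dots> = (\<Sum>i\<in>T. \<bar>x $ i\<bar>) + c" using l1_split[of x T] c_def by simp
      finally show ?thesis by simp
    qed
    show ?thesis
    proof (cases "h = 0")
      case True
      then show ?thesis using d0 Cpos assms(5) d_def
        by (smt (verit) Ah divide_nonneg_pos mult_nonneg_nonneg norm_ge_zero norm_zero)
    next
      case False
      then have hn: "norm h > 0" by simp
      show ?thesis
      proof (cases "a \<ge> \<gamma> * b")
        case True
        define w where "w = h /\<^sub>R norm h"
        have "w \<in> S_gamma s \<gamma>"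
        proof -
          have "norm w = 1" unfolding w_def using hn by simp
          moreover have "l1norm (restrict_vec w T) = a / norm h"
            unfolding l1_restrict a_def w_def using hn
            by (simp add: sum_divide_distrib abs_mult divide_inverse mult.commute sum_distrib_left)
          moreover have "l1norm (restrict_vec w (-T)) = b / norm h"
            unfolding l1_restrict b_def w_def using hn
            by (simp add: sum_divide_distrib abs_mult divide_inverse mult.commute sum_distrib_left)
          moreover have "\<gamma> * (b / norm h) \<le> a / norm h" using True hn
            by (simp add: divide_right_mono)
          ultimately show ?thesis unfolding S_gamma_def using vs T_def by auto
        qed
        then have "\<eta> \<le> norm (A *v w)" by (rule Sbound)
        also have "A *v w = (1 / norm h) *\<^sub>R (A *v h)" unfolding w_def
          by (simp add: matrix_vector_mult_scaleR divide_inverse)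
        finally have "\<eta> \<le> norm (A *v h) / norm h" using hn by simp
        then have "\<eta> * norm h \<le> norm (A *v h)" using hn by (simp add: field_simps)
        then have "\<eta> * norm h \<le> 2 * \<epsilon>" using Ah by simp
        then have "norm h \<le> 2 * \<epsilon> / \<eta>" using assms(5) by (simp add: field_simps mult.commute)
        then show ?thesis using Cpos d0 d_def by (smt (verit) mult_nonneg_nonneg)
      next
        case False
        then have "a < \<gamma> * b" by simp
        then have "b * (1 - \<gamma>) < 2 * c" using bac by (simp add: algebra_simps)
        then have "b * (1 - \<gamma>) \<le> 2 * d" using cd by simp
        then have b2: "b \<le> 2 * d / (1 - \<gamma>)" using assms(4) by (simp add: field_simps)
        have "norm h \<le> (1 + \<gamma>) * b" using hab \<open>a < \<gamma> * b\<close> by (simp add: algebra_simps)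
        also have "\<dots> \<le> (1 + \<gamma>) * (2 * d / (1 - \<gamma>))"
          using b2 assms(3) by (intro mult_left_mono) auto
        also have "\<dots> = C * d" unfolding C_def by (simp add: field_simps)
        finally show ?thesis using d_def assms(5) assms(8)
          by (smt (verit) divide_nonneg_pos norm_ge_zero)
      qed
    qed
  qed
  have ne: "{l1norm (x - v) | v. card {i. v $ i \<noteq> 0} \<le> s} \<noteq> {}"
  proof -
    have "l1norm (x - 0) \<in> {l1norm (x - v) | v. card {i. v $ i \<noteq> 0} \<le> s}"
      by (rule CollectI, rule exI[where x=0]) simp
    then show ?thesis by blast
  qed
  have "(norm h - 2 * \<epsilon> / \<eta>) / C \<le> sigma_s s x"
    unfolding sigma_s_def
  proof (rule cInf_greatest[OF ne])
    fix r assume "r \<in> {l1norm (x - v) | v. card {i. v $ i \<noteq> 0} \<le> s}"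
    then obtain v where "r = l1norm (x - v)" "card {i. v $ i \<noteq> 0} \<le> s" by auto
    then show "(norm h - 2 * \<epsilon> / \<eta>) / C \<le> r"
    proof -
      have "norm h \<le> C * r + 2 * \<epsilon> / \<eta>" using main[OF \<open>card {i. v $ i \<noteq> 0} \<le> s\<close>] \<open>r = _\<close> by simp
      then show ?thesis using Cpos by (simp add: divide_le_eq mult.commute)
    qed
  qed
  then have "norm h - 2 * \<epsilon> / \<eta> \<le> C * sigma_s s x" using Cpos
    by (simp add: divide_le_eq mult.commute)
  then show ?thesis unfolding h_def C_def by simp
qed

end
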